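(* Let $A=A_{\bar 0}\oplus A_{\bar 1}$ be a finite-dimensional associative superalgebra over an algebraically closed field $\mathbb{K}$ of characteristic zero. Then $A$ admits an odd-symmetric structure if and only if there exists an isomorphism of $A_{\bar 0}$-bimodules $\phi:A_{\bar 1}\to A_{\bar 0}^*$ such that $\phi(x)(y.z)=\phi(z)(x.y)$ for all $x,y,z\in A_{\bar 1}$.
   Context: A superalgebra is a $\mathbb{Z}_2$-graded algebra $A=A_{\bar 0}\oplus A_{\bar 1}$ with $A_\alpha A_\beta\subseteq A_{\alpha+\beta}$; $|x|$ denotes the degree of a homogeneous element. A bilinear form $B$ on $A$ is odd if $B(A_{\bar 0},A_{\bar 0})=B(A_{\bar 1},A_{\bar 1})=\{0\}$; supersymmetric if $B(x,y)=(-1)^{|x||y|}B(y,x)$ for homogeneous $x,y$; associative if $B(x.y,z)=B(x,y.z)$; non-degenerate if $B(x,A)=\{0\}$ implies $x=0$. An odd-symmetric structure on $A$ is an odd, supersymmetric, associative, non-degenerate bilinear form on $A$. $A_{\bar 1}$ is an $A_{\bar 0}$-bimodule via left and right multiplication, and $A_{\bar 0}^*$ is an $A_{\bar 0}$-bimodule via $(x\cdot f)(y)=f(y.x)$ and $(f\cdot x)(y)=f(x.y)$ for $x,y\in A_{\bar 0}$, $f\in A_{\bar 0}^*$. *)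

theory Defs
  imports Main "HOL-Computational_Algebra.Polynomial"
begin

definition alg_closed_field :: "'k::field itself \<Rightarrow> bool" where
  "alg_closed_field _ \<longleftrightarrow> (\<forall>p :: 'k poly. degree p > 0 \<longrightarrow> (\<exists>x. poly p x = 0))"

definition fin_dim_vector_space :: "('k::field \<Rightarrow> 'a::ab_group_add \<Rightarrow> 'a) \<Rightarrow> bool" where
  "fin_dim_vector_space scale \<longleftrightarrow>
     vector_space scale \<and> (\<exists>S. finite S \<and> module.span scale S = UNIV)"

definition assoc_superalgebra ::
  "('k::field \<Rightarrow> 'a::ab_group_add \<Rightarrow> 'a) \<Rightarrow> ('a \<Rightarrow> 'a \<Rightarrow> 'a) \<Rightarrow> 'a set \<Rightarrow> 'a set \<Rightarrow> bool" where
  "assoc_superalgebra scale mul A0 A1 \<longleftrightarrow>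
     (\<forall>x y z. mul (x + y) z = mul x z + mul y z) \<and>
     (\<forall>x y z. mul x (y + z) = mul x y + mul x z) \<and>
     (\<forall>c x y. mul (scale c x) y = scale c (mul x y)) \<and>
     (\<forall>c x y. mul x (scale c y) = scale c (mul x y)) \<and>
     (\<forall>x y z. mul (mul x y) z = mul x (mul y z)) \<and>
     module.subspace scale A0 \<and> module.subspace scale A1 \<and>
     A0 \<inter> A1 = {0} \<and> (\<forall>x. \<exists>a\<in>A0. \<exists>b\<in>A1. x = a + b) \<and>
     (\<forall>x\<in>A0. \<forall>y\<in>A0. mul x y \<in> A0) \<and>
     (\<forall>x\<in>A0. \<forall>y\<in>A1. mul x y \<in> A1) \<and>
     (\<forall>x\<in>A1. \<forall>y\<in>A0. mul x y \<in> A1) \<and>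
     (\<forall>x\<in>A1. \<forall>y\<in>A1. mul x y \<in> A0)"

definition bilinear_form :: "('k::field \<Rightarrow> 'a::ab_group_add \<Rightarrow> 'a) \<Rightarrow> ('a \<Rightarrow> 'a \<Rightarrow> 'k) \<Rightarrow> bool" where
  "bilinear_form scale B \<longleftrightarrow>
     (\<forall>x y z. B (x + y) z = B x z + B y z) \<and>
     (\<forall>x y z. B x (y + z) = B x y + B x z) \<and>
     (\<forall>c x y. B (scale c x) y = c * B x y) \<and>
     (\<forall>c x y. B x (scale c y) = c * B x y)"

definition odd_symmetric_structure ::
  "('k::field \<Rightarrow> 'a::ab_group_add \<Rightarrow> 'a) \<Rightarrow> ('a \<Rightarrow> 'a \<Rightarrow> 'a) \<Rightarrow> 'a set \<Rightarrow> 'a set \<Rightarrow> ('a \<Rightarrow> 'a \<Rightarrow> 'k) \<Rightarrow> bool" where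
  "odd_symmetric_structure scale mul A0 A1 B \<longleftrightarrow>
     bilinear_form scale B \<and>
     \<comment> \<open>odd\<close>
     (\<forall>x\<in>A0. \<forall>y\<in>A0. B x y = 0) \<and> (\<forall>x\<in>A1. \<forall>y\<in>A1. B x y = 0) \<and>
     \<comment> \<open>supersymmetric\<close>
     (\<forall>x\<in>A0. \<forall>y\<in>A0. B x y = B y x) \<and>
     (\<forall>x\<in>A0. \<forall>y\<in>A1. B x y = B y x) \<and>
     (\<forall>x\<in>A1. \<forall>y\<in>A0. B x y = B y x) \<and>
     (\<forall>x\<in>A1. \<forall>y\<in>A1. B x y = - B y x) \<and>
     \<comment> \<open>associative\<close>
     (\<forall>x y z. B (mul x y) z = B x (mul y z)) \<and>
     \<comment> \<open>non-degenerate\<close>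
     (\<forall>x. (\<forall>y. B x y = 0) \<longrightarrow> x = 0)"

text \<open>Linear functionals on A0 (elements of the dual A0^*), represented by functions whose
  values matter only on A0.\<close>
definition lin_functional_on :: "('k::field \<Rightarrow> 'a::ab_group_add \<Rightarrow> 'a) \<Rightarrow> 'a set \<Rightarrow> ('a \<Rightarrow> 'k) \<Rightarrow> bool" where
  "lin_functional_on scale V f \<longleftrightarrow>
     (\<forall>y\<in>V. \<forall>y'\<in>V. f (y + y') = f y + f y') \<and> (\<forall>c. \<forall>y\<in>V. f (scale c y) = c * f y)"

text \<open>phi : A1 -> A0^* is an isomorphism of A0-bimodules, where A0^* carries the bimodule
  structure (x.f)(y) = f(y.x), (f.x)(y) = f(x.y).\<close>
definition bimodule_iso_to_dual ::
  "('k::field \<Rightarrow> 'a::ab_group_add \<Rightarrow> 'a) \<Rightarrow> ('a \<Rightarrow> 'a \<Rightarrow> 'a) \<Rightarrow> 'a set \<Rightarrow> 'a set \<Rightarrow> ('a \<Rightarrow> 'a \<Rightarrow> 'k) \<Rightarrow> bool" where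
  "bimodule_iso_to_dual scale mul A0 A1 \<phi> \<longleftrightarrow>
     \<comment> \<open>maps A1 into A0^*\<close>
     (\<forall>x\<in>A1. lin_functional_on scale A0 (\<phi> x)) \<and>
     \<comment> \<open>linear\<close>
     (\<forall>x\<in>A1. \<forall>x'\<in>A1. \<forall>y\<in>A0. \<phi> (x + x') y = \<phi> x y + \<phi> x' y) \<and>
     (\<forall>c. \<forall>x\<in>A1. \<forall>y\<in>A0. \<phi> (scale c x) y = c * \<phi> x y) \<and>
     \<comment> \<open>injective\<close>
     (\<forall>x\<in>A1. \<forall>x'\<in>A1. (\<forall>y\<in>A0. \<phi> x y = \<phi> x' y) \<longrightarrow> x = x') \<and>
     \<comment> \<open>surjective onto A0^*\<close>
     (\<forall>f. lin_functional_on scale A0 f \<longrightarrow> (\<exists>x\<in>A1. \<forall>y\<in>A0. \<phi> x y = f y)) \<and>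
     \<comment> \<open>bimodule homomorphism\<close>
     (\<forall>a\<in>A0. \<forall>x\<in>A1. \<forall>y\<in>A0. \<phi> (mul a x) y = \<phi> x (mul y a)) \<and>
     (\<forall>a\<in>A0. \<forall>x\<in>A1. \<forall>y\<in>A0. \<phi> (mul x a) y = \<phi> x (mul a y))"

end

theory Submission
  imports Defs
begin

lemma exists_functional:
  assumes vs: "vector_space scale" and a: "a \<noteq> 0"
  shows "\<exists>f. (\<forall>x y. f (x+y) = f x + f y) \<and> (\<forall>c x. f (scale c x) = (c::'k::field) * f x) \<and> f a \<noteq> 0"
proof -
  interpret vector_space scale by fact
  have ia: "independent {a}" using a independent_empty by (intro independent_insertI) (auto simp: span_empty)
  define T where "T = extend_basis {a}"
  have T: "independent T" "span T = UNIV" "a \<in> T"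
    using ia extend_basis_superset[OF ia] independent_extend_basis[OF ia] span_extend_basis[OF ia]
    unfolding T_def by auto
  show ?thesis
    apply (rule exI[of _ "\<lambda>v. representation T v a"])
    using T by (simp add: representation_add representation_scale representation_basis)
qed

lemma dual_surj:
  fixes scale :: "'k::field \<Rightarrow> 'a::ab_group_add \<Rightarrow> 'a"
  assumes vs: "vector_space scale" and S: "finite S" "module.span scale S = UNIV"
    and Badd1: "\<And>x y z. B (x + y) z = B x z + B y z"
    and Badd2: "\<And>x y z. B x (y + z) = B x y + B x z"
    and Bsc1: "\<And>c x y. B (scale c x) y = c * B x y"
    and Bsc2: "\<And>c x y. B x (scale c y) = c * B x y"
    and nd: "\<And>x. (\<forall>y. B x y = 0) \<Longrightarrow> x = 0"
    and gadd: "\<And>x y. g (x+y) = g x + g y" and gsc: "\<And>c x. g (scale c x) = c * g x"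
  shows "\<exists>z. \<forall>y. B z y = g y"
proof -
  interpret vector_space scale by fact
  obtain T where T: "T \<subseteq> S" "independent T" "S \<subseteq> span T"
    using maximal_independent_subset by blast
  have spT: "span T = UNIV" using T S span_mono[OF T(3)] by (metis span_span top.extremum_uniqueI)
  have fT: "finite T" using T S finite_subset by blast
  interpret fd: finite_dimensional_vector_space scale T
    by unfold_locales (use fT T spT in auto)
  have Bsub1: "B (x - y) z = B x z - B y z" for x y z
    using Badd1[of "x - y" y z] by (simp add: algebra_simps)
  have Bsub2: "B z (x - y) = B z x - B z y" for x y z
    using Badd2[of z "x - y" y] by (simp add: algebra_simps)
  have gsub: "g (x - y) = g x - g y" for x y
    using gadd[of "x - y" y] by (simp add: algebra_simps)
  define L where "L z = (\<Sum>s\<in>T. scale (B z s) s)" for z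
  have lin: "Vector_Spaces.linear scale scale L"
    unfolding Vector_Spaces.linear_def module_hom_def module_hom_axioms_def
    using vs module_iff_vector_space
    by (simp add: L_def Badd1 scale_left_distrib sum.distrib Bsc1 scale_sum_right del: module_iff_vector_space) (simp add: module_iff_vector_space)
  interpret L: Vector_Spaces.linear scale scale L by (rule lin)
  have agree: "B z y = h y" if h: "\<forall>s\<in>T. B z s = h s"
    and hadd: "\<And>x y. h (x+y) = h x + h y" and hsc: "\<And>c x. h (scale c x) = c * h x" for z y h
  proof -
    have "y \<in> span T" using spT by auto
    then show ?thesis
    proof (induction rule: span_induct)
      case base
      show ?case unfolding subspace_def
        using Bsc2[of z 0 0] hsc[of 0 0]
        by (auto simp: Badd2 hadd Bsc2 hsc)
    next
      case (step x) then show ?case using h by auto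
    qed
  qed
  have "inj L"
    unfolding L.inj_iff_eq_0
  proof (intro allI impI)
    fix z assume "L z = 0"
    then have "\<forall>s\<in>T. B z s = 0"
      using T(2) fd.independent_explicit unfolding L_def by blast
    then have "\<forall>y. B z y = 0" using agree[of z "\<lambda>_. 0"] by simp
    then show "z = 0" by (rule nd)
  qed
  then have "surj L" using fd.linear_inj_imp_surj[OF lin] by blast
  then obtain z where z: "L z = (\<Sum>s\<in>T. scale (g s) s)" by (metis surjD)
  have "(\<Sum>s\<in>T. scale (B z s - g s) s) = 0"
    using z unfolding L_def by (simp add: scale_left_diff_distrib sum_subtractf)
  moreover have ind: "\<forall>c. (\<Sum>s\<in>T. scale (c s) s) = 0 \<longrightarrow> (\<forall>s\<in>T. c s = 0)"
    using T(2) fd.independent_explicit by blast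
  ultimately have "\<forall>s\<in>T. B z s - g s = 0"
    using spec[OF ind, of "\<lambda>s. B z s - g s"] by blast
  then have "\<forall>y. B z y = g y" using agree[of z g] gadd gsc by simp
  then show ?thesis by blast
qed

theorem mainTheorem2:
  fixes scale :: "'k::field_char_0 \<Rightarrow> 'a::ab_group_add \<Rightarrow> 'a"
    and mul :: "'a \<Rightarrow> 'a \<Rightarrow> 'a"
    and A0 A1 :: "'a set"
  assumes "alg_closed_field TYPE('k)"
    and "fin_dim_vector_space scale"
    and "assoc_superalgebra scale mul A0 A1"
  shows "(\<exists>B. odd_symmetric_structure scale mul A0 A1 B) \<longleftrightarrow>
         (\<exists>\<phi>. bimodule_iso_to_dual scale mul A0 A1 \<phi> \<and>
              (\<forall>x\<in>A1. \<forall>y\<in>A1. \<forall>z\<in>A1. \<phi> x (mul y z) = \<phi> z (mul x y)))"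
proof -
  have vs: "vector_space scale" and S: "\<exists>S. finite S \<and> module.span scale S = UNIV"
    using assms(2) unfolding fin_dim_vector_space_def by auto
  interpret vector_space scale by (rule vs)
  note sa = assms(3)[unfolded assoc_superalgebra_def]
  have madd1: "\<And>x y z. mul (x + y) z = mul x z + mul y z"
   and madd2: "\<And>x y z. mul x (y + z) = mul x y + mul x z"
   and msc1: "\<And>c x y. mul (scale c x) y = scale c (mul x y)"
   and msc2: "\<And>c x y. mul x (scale c y) = scale c (mul x y)"
   and massoc: "\<And>x y z. mul (mul x y) z = mul x (mul y z)"
   and sub0: "subspace A0" and sub1: "subspace A1"
   and int01: "A0 \<inter> A1 = {0}" and dec: "\<And>x. \<exists>a\<in>A0. \<exists>b\<in>A1. x = a + b"
   and m00: "\<And>x y. x\<in>A0 \<Longrightarrow> y\<in>A0 \<Longrightarrow> mul x y \<in> A0"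
   and m01: "\<And>x y. x\<in>A0 \<Longrightarrow> y\<in>A1 \<Longrightarrow> mul x y \<in> A1"
   and m10: "\<And>x y. x\<in>A1 \<Longrightarrow> y\<in>A0 \<Longrightarrow> mul x y \<in> A1"
   and m11: "\<And>x y. x\<in>A1 \<Longrightarrow> y\<in>A1 \<Longrightarrow> mul x y \<in> A0"
    using sa by auto
  define p0 where "p0 y = (SOME a. a \<in> A0 \<and> y - a \<in> A1)" for y
  define p1 where "p1 y = y - p0 y" for y
  have p0: "p0 y \<in> A0" "p1 y \<in> A1" for y
  proof -
    obtain a b where "a \<in> A0" "b \<in> A1" "y = a + b" using dec by blast
    then have "\<exists>a. a \<in> A0 \<and> y - a \<in> A1" by (intro exI[of _ a]) simp
    then have "p0 y \<in> A0 \<and> y - p0 y \<in> A1" unfolding p0_def by (rule someI_ex)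
    then show "p0 y \<in> A0" "p1 y \<in> A1" unfolding p1_def by auto
  qed
  have pdec: "y = p0 y + p1 y" for y unfolding p1_def by simp
  have uniq: "p0 (a + b) = a \<and> p1 (a + b) = b" if "a \<in> A0" "b \<in> A1" for a b
  proof -
    have e: "a - p0 (a+b) = p1 (a+b) - b" using pdec[of "a+b"] by (simp add: algebra_simps)
    have "a - p0 (a+b) \<in> A0" using subspace_diff[OF sub0 that(1) p0(1)] .
    moreover have "p1 (a+b) - b \<in> A1" using subspace_diff[OF sub1 p0(2) that(2)] .
    ultimately have "p1 (a+b) - b \<in> A0 \<inter> A1" using e by auto
    then have "p1 (a+b) - b = 0" using int01 by blast
    then have "a - p0 (a+b) = 0" "p1 (a+b) - b = 0" using e by auto
    then show ?thesis by simp
  qed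
  have pA0: "p0 a = a" "p1 a = 0" if "a \<in> A0" for a
    using uniq[OF that subspace_0[OF sub1]] by auto
  have pA1: "p0 b = 0" "p1 b = b" if "b \<in> A1" for b
    using uniq[OF subspace_0[OF sub0] that] by auto
  have padd: "p0 (x + y) = p0 x + p0 y" "p1 (x + y) = p1 x + p1 y" for x y
  proof -
    have "x + y = (p0 x + p0 y) + (p1 x + p1 y)" using pdec[of x] pdec[of y] by (simp add: algebra_simps)
    then show "p0 (x + y) = p0 x + p0 y" "p1 (x + y) = p1 x + p1 y"
      using uniq[OF subspace_add[OF sub0 p0(1) p0(1)] subspace_add[OF sub1 p0(2) p0(2)]] by metis+
  qed
  have psc: "p0 (scale c x) = scale c (p0 x)" "p1 (scale c x) = scale c (p1 x)" for c x
  proof -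
    have "scale c x = scale c (p0 x) + scale c (p1 x)" using pdec[of x] by (metis scale_right_distrib)
    then show "p0 (scale c x) = scale c (p0 x)" "p1 (scale c x) = scale c (p1 x)"
      using uniq[OF subspace_scale[OF sub0 p0(1)] subspace_scale[OF sub1 p0(2)]] by metis+
  qed
  have pmul: "p0 (mul x y) = mul (p0 x) (p0 y) + mul (p1 x) (p1 y)"
     "p1 (mul x y) = mul (p0 x) (p1 y) + mul (p1 x) (p0 y)" for x y
  proof -
    have "mul x y = (mul (p0 x) (p0 y) + mul (p1 x) (p1 y)) + (mul (p0 x) (p1 y) + mul (p1 x) (p0 y))"
      using pdec[of x] pdec[of y] by (metis madd1 madd2 add.commute add.left_commute add.assoc)
    moreover have "mul (p0 x) (p0 y) + mul (p1 x) (p1 y) \<in> A0"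
      by (intro subspace_add[OF sub0] m00 m11 p0)
    moreover have "mul (p0 x) (p1 y) + mul (p1 x) (p0 y) \<in> A1"
      by (intro subspace_add[OF sub1] m01 m10 p0)
    ultimately show "p0 (mul x y) = mul (p0 x) (p0 y) + mul (p1 x) (p1 y)"
     "p1 (mul x y) = mul (p0 x) (p1 y) + mul (p1 x) (p0 y)" using uniq by metis+
  qed
  show ?thesis
  proof
    assume "\<exists>B. odd_symmetric_structure scale mul A0 A1 B"
    then obtain B where B: "odd_symmetric_structure scale mul A0 A1 B" by blast
    note Bd = B[unfolded odd_symmetric_structure_def bilinear_form_def]
    have Badd1: "\<And>x y z. B (x + y) z = B x z + B y z"
     and Badd2: "\<And>x y z. B x (y + z) = B x y + B x z"
     and Bsc1: "\<And>c x y. B (scale c x) y = c * B x y"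
     and Bsc2: "\<And>c x y. B x (scale c y) = c * B x y"
     and odd00: "\<And>x y. x\<in>A0 \<Longrightarrow> y\<in>A0 \<Longrightarrow> B x y = 0"
     and odd11: "\<And>x y. x\<in>A1 \<Longrightarrow> y\<in>A1 \<Longrightarrow> B x y = 0"
     and sym01: "\<And>x y. x\<in>A0 \<Longrightarrow> y\<in>A1 \<Longrightarrow> B x y = B y x"
     and sym10: "\<And>x y. x\<in>A1 \<Longrightarrow> y\<in>A0 \<Longrightarrow> B x y = B y x"
     and Bassoc: "\<And>x y z. B (mul x y) z = B x (mul y z)"
     and nd: "\<And>x. (\<forall>y. B x y = 0) \<Longrightarrow> x = 0"
      using Bd by auto
    have Bsub1: "B (x - y) z = B x z - B y z" for x y z
      using Badd1[of "x - y" y z] by (simp add: algebra_simps)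
    have B1p0: "B x y = B x (p0 y)" if "x \<in> A1" for x y
      using Badd2[of x "p0 y" "p1 y"] pdec[of y] odd11[OF that p0(2)] by simp
    show "\<exists>\<phi>. bimodule_iso_to_dual scale mul A0 A1 \<phi> \<and>
              (\<forall>x\<in>A1. \<forall>y\<in>A1. \<forall>z\<in>A1. \<phi> x (mul y z) = \<phi> z (mul x y))"
    proof (intro exI[of _ B] conjI)
      show "\<forall>x\<in>A1. \<forall>y\<in>A1. \<forall>z\<in>A1. B x (mul y z) = B z (mul x y)"
        using Bassoc sym01 m11 by metis
      show "bimodule_iso_to_dual scale mul A0 A1 B"
        unfolding bimodule_iso_to_dual_def
      proof (intro conjI)
        show "\<forall>x\<in>A1. lin_functional_on scale A0 (B x)"
          unfolding lin_functional_on_def by (simp add: Badd2 Bsc2)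
        show "\<forall>x\<in>A1. \<forall>x'\<in>A1. \<forall>y\<in>A0. B (x + x') y = B x y + B x' y" by (simp add: Badd1)
        show "\<forall>c. \<forall>x\<in>A1. \<forall>y\<in>A0. B (scale c x) y = c * B x y" by (simp add: Bsc1)
        show "\<forall>x\<in>A1. \<forall>x'\<in>A1. (\<forall>y\<in>A0. B x y = B x' y) \<longrightarrow> x = x'"
        proof (intro ballI impI)
          fix x x' assume x: "x \<in> A1" "x' \<in> A1" and h: "\<forall>y\<in>A0. B x y = B x' y"
          have "\<forall>y. B (x - x') y = 0"
          proof
            fix y
            have "B (x - x') y = B (x - x') (p0 y)" using B1p0 subspace_diff[OF sub1 x] by blast
            also have "\<dots> = 0" using h p0(1) by (simp add: Bsub1)
            finally show "B (x - x') y = 0" .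
          qed
          then show "x = x'" using nd by fastforce
        qed
        show "\<forall>f. lin_functional_on scale A0 f \<longrightarrow> (\<exists>x\<in>A1. \<forall>y\<in>A0. B x y = f y)"
        proof (intro allI impI)
          fix f assume f: "lin_functional_on scale A0 f"
          obtain S where S: "finite S" "span S = UNIV" using S by blast
          have "\<exists>z. \<forall>y. B z y = f (p0 y)"
            apply (rule dual_surj[OF vs S Badd1 Badd2 Bsc1 Bsc2 nd])
            using f p0(1) unfolding lin_functional_on_def by (auto simp: padd psc)
          then obtain z where z: "\<forall>y. B z y = f (p0 y)" by blast
          show "\<exists>x\<in>A1. \<forall>y\<in>A0. B x y = f y"
          proof (intro bexI[of _ "p1 z"] ballI)
            fix y assume y: "y \<in> A0"
            have "B (p1 z) y = B z y - B (p0 z) y"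
              using Badd1[of "p0 z" "p1 z" y] pdec[of z] by simp
            then show "B (p1 z) y = f y" using z odd00[OF p0(1) y] pA0[OF y] by simp
          qed (rule p0(2))
        qed
        show "\<forall>a\<in>A0. \<forall>x\<in>A1. \<forall>y\<in>A0. B (mul a x) y = B x (mul y a)"
          using Bassoc sym10 m10 by metis
        show "\<forall>a\<in>A0. \<forall>x\<in>A1. \<forall>y\<in>A0. B (mul x a) y = B x (mul a y)"
          using Bassoc by metis
      qed
    qed
  next
    assume "\<exists>\<phi>. bimodule_iso_to_dual scale mul A0 A1 \<phi> \<and>
              (\<forall>x\<in>A1. \<forall>y\<in>A1. \<forall>z\<in>A1. \<phi> x (mul y z) = \<phi> z (mul x y))"
    then obtain \<phi> where ph: "bimodule_iso_to_dual scale mul A0 A1 \<phi>"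
      and cyc: "\<And>x y z. x\<in>A1 \<Longrightarrow> y\<in>A1 \<Longrightarrow> z\<in>A1 \<Longrightarrow> \<phi> x (mul y z) = \<phi> z (mul x y)"
      by blast
    note phd = ph[unfolded bimodule_iso_to_dual_def lin_functional_on_def]
    have lf: "\<And>x y y'. x\<in>A1 \<Longrightarrow> y\<in>A0 \<Longrightarrow> y'\<in>A0 \<Longrightarrow> \<phi> x (y + y') = \<phi> x y + \<phi> x y'"
     and lfs: "\<And>c x y. x\<in>A1 \<Longrightarrow> y\<in>A0 \<Longrightarrow> \<phi> x (scale c y) = c * \<phi> x y"
     and phadd: "\<And>x x' y. x\<in>A1 \<Longrightarrow> x'\<in>A1 \<Longrightarrow> y\<in>A0 \<Longrightarrow> \<phi> (x + x') y = \<phi> x y + \<phi> x' y"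
     and phsc: "\<And>c x y. x\<in>A1 \<Longrightarrow> y\<in>A0 \<Longrightarrow> \<phi> (scale c x) y = c * \<phi> x y"
     and inj: "\<And>x x'. x\<in>A1 \<Longrightarrow> x'\<in>A1 \<Longrightarrow> (\<forall>y\<in>A0. \<phi> x y = \<phi> x' y) \<Longrightarrow> x = x'"
     and surj: "\<And>f. lin_functional_on scale A0 f \<Longrightarrow> (\<exists>x\<in>A1. \<forall>y\<in>A0. \<phi> x y = f y)"
     and hom1: "\<And>a x y. a\<in>A0 \<Longrightarrow> x\<in>A1 \<Longrightarrow> y\<in>A0 \<Longrightarrow> \<phi> (mul a x) y = \<phi> x (mul y a)"
     and hom2: "\<And>a x y. a\<in>A0 \<Longrightarrow> x\<in>A1 \<Longrightarrow> y\<in>A0 \<Longrightarrow> \<phi> (mul x a) y = \<phi> x (mul a y)"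
      using phd unfolding lin_functional_on_def by auto
    have z0: "\<phi> x 0 = 0" if "x \<in> A1" for x
      using lfs[OF that subspace_0[OF sub0], of 0] by simp
    have z1: "\<phi> 0 y = 0" if "y \<in> A0" for y
      using phsc[OF subspace_0[OF sub1] that, of 0] by simp
    define B where "B u v = \<phi> (p1 u) (p0 v) + \<phi> (p1 v) (p0 u)" for u v
    have "odd_symmetric_structure scale mul A0 A1 B"
      unfolding odd_symmetric_structure_def bilinear_form_def
    proof (intro conjI allI ballI impI)
      fix x y z
      show "B (x + y) z = B x z + B y z"
        by (simp add: B_def padd phadd lf p0 algebra_simps)
      show "B x (y + z) = B x y + B x z"
        by (simp add: B_def padd phadd lf p0 algebra_simps)
    next
      fix c x y
      show "B (scale c x) y = c * B x y"
        by (simp add: B_def psc phsc lfs p0 algebra_simps)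
      show "B x (scale c y) = c * B x y"
        by (simp add: B_def psc phsc lfs p0 algebra_simps)
    next
      fix x y assume "x \<in> A0" "y \<in> A0" then show "B x y = 0"
        by (simp add: B_def pA0 z1)
    next
      fix x y assume "x \<in> A1" "y \<in> A1" then show "B x y = 0"
        by (simp add: B_def pA1 z0)
    next
      fix x y show "B x y = B y x" by (simp add: B_def add.commute)
    next
      fix x y show "B x y = B y x" by (simp add: B_def add.commute)
    next
      fix x y show "B x y = B y x" by (simp add: B_def add.commute)
    next
      fix x y assume "x \<in> A1" "y \<in> A1" then show "B x y = - B y x"
        by (simp add: B_def pA1 z0)
    next
      fix x y z
      let ?x0 = "p0 x" and ?x1 = "p1 x" and ?y0 = "p0 y" and ?y1 = "p1 y" and ?z0 = "p0 z" and ?z1 = "p1 z"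
      have mem: "?x0 \<in> A0" "?y0 \<in> A0" "?z0 \<in> A0" "?x1 \<in> A1" "?y1 \<in> A1" "?z1 \<in> A1"
        using p0 by auto
      have "B (mul x y) z = \<phi> (mul ?x0 ?y1) ?z0 + \<phi> (mul ?x1 ?y0) ?z0
          + \<phi> ?z1 (mul ?x0 ?y0) + \<phi> ?z1 (mul ?x1 ?y1)"
        unfolding B_def pmul using mem
        by (simp add: phadd lf m00 m11 m01 m10)
      also have "\<dots> = \<phi> ?y1 (mul ?z0 ?x0) + \<phi> ?x1 (mul ?y0 ?z0)
          + \<phi> (mul ?y0 ?z1) ?x0 + \<phi> ?x1 (mul ?y1 ?z1)"
        using hom1[of ?x0 ?y1 ?z0] hom2[of ?z0 ?y1 ?x0] hom2[of ?y0 ?x1 ?z0]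
          hom1[of ?y0 ?z1 ?x0] cyc[of ?x1 ?y1 ?z1] mem by (simp add: algebra_simps)
      also have "\<dots> = B x (mul y z)"
        unfolding B_def pmul using mem
        by (simp add: phadd lf m00 m11 m01 m10 hom2 algebra_simps)
      finally show "B (mul x y) z = B x (mul y z)" .
    next
      fix x assume h: "\<forall>y. B x y = 0"
      have "p1 x = 0"
      proof (rule inj[OF p0(2) subspace_0[OF sub1]], intro ballI)
        fix y assume y: "y \<in> A0"
        have "B x y = \<phi> (p1 x) y" using y by (simp add: B_def pA0 z1 p0)
        then show "\<phi> (p1 x) y = \<phi> 0 y" using h z1[OF y] by simp
      qed
      moreover have "p0 x = 0"
      proof (rule ccontr)
        assume ne: "p0 x \<noteq> 0"
        obtain f where f: "\<forall>x y. f (x+y) = f x + f y" "\<forall>c x. f (scale c x) = c * f x" "f (p0 x) \<noteq> 0"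
          using exists_functional[OF vs ne] by blast
        have "lin_functional_on scale A0 f" unfolding lin_functional_on_def using f by auto
        then obtain y where y: "y \<in> A1" "\<forall>a\<in>A0. \<phi> y a = f a" using surj by blast
        have "B x y = \<phi> y (p0 x)" using y(1) \<open>p1 x = 0\<close> p0 by (simp add: B_def pA1 z0 z0[OF subspace_0[OF sub1]])
        then show False using h y f(3) p0(1) by simp
      qed
      ultimately show "x = 0" using pdec[of x] by simp
    qed
    then show "\<exists>B. odd_symmetric_structure scale mul A0 A1 B" by blast
  qed
qed

end
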